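(* Let $A$ be a strongly indecomposable torsion-free Abelian group of finite rank with $A=\mathrm{PSoc}\,A$. Then $\mathrm{End}\,A$ is centrally essential if and only if $\mathrm{End}\,A$ is commutative.
   Context: All rings are associative with non-zero identity. A ring $R$ is centrally essential if for every non-zero $a\in R$ there exist non-zero elements $x,y$ of the center of $R$ with $ax=y$. For torsion-free Abelian groups $B,D$, $B\doteq D$ means $nB\subseteq D$ and $mD\subseteq B$ for some positive integers $n,m$; a torsion-free group $A$ is strongly indecomposable if it has no quasi-decomposition $A\doteq B\oplus D$ with $B,D$ non-zero. The pseudo-socle $\mathrm{PSoc}\,A$ is the pure subgroup of $A$ generated by all minimal non-zero pure fully invariant subgroups of $A$. *)

theory Defs
  imports Main
begin

text \<open>The Abelian group A is modelled as the whole carrier of a type 'a of class ab_group_add.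
Endomorphisms are additive self-maps; the ring End A has composition as multiplication.\<close>

definition nsmul :: "nat \<Rightarrow> 'a::ab_group_add \<Rightarrow> 'a" where
  "nsmul n x = (\<Sum>i<n. x)"

definition zsmul :: "int \<Rightarrow> 'a::ab_group_add \<Rightarrow> 'a" where
  "zsmul k x = (if 0 \<le> k then nsmul (nat k) x else - nsmul (nat (- k)) x)"

definition torsion_free :: "'a::ab_group_add itself \<Rightarrow> bool" where
  "torsion_free _ \<longleftrightarrow> (\<forall>(n::nat) (x::'a). 0 < n \<longrightarrow> nsmul n x = 0 \<longrightarrow> x = 0)"

definition lin_indep :: "'a::ab_group_add set \<Rightarrow> bool" where
  "lin_indep S \<longleftrightarrow> finite S \<and>
     (\<forall>c::'a \<Rightarrow> int. (\<Sum>s\<in>S. zsmul (c s) s) = 0 \<longrightarrow> (\<forall>s\<in>S. c s = 0))"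

definition finite_rank :: "'a::ab_group_add itself \<Rightarrow> bool" where
  "finite_rank _ \<longleftrightarrow> (\<exists>n. \<forall>S::'a set. lin_indep S \<longrightarrow> card S \<le> n)"

definition is_subgroup :: "'a::ab_group_add set \<Rightarrow> bool" where
  "is_subgroup B \<longleftrightarrow> 0 \<in> B \<and> (\<forall>x\<in>B. \<forall>y\<in>B. x + y \<in> B) \<and> (\<forall>x\<in>B. - x \<in> B)"

definition End_grp :: "('a::ab_group_add \<Rightarrow> 'a) set" where
  "End_grp = {f. \<forall>x y. f (x + y) = f x + f y}"

definition strongly_indecomposable :: "'a::ab_group_add itself \<Rightarrow> bool" where
  "strongly_indecomposable _ \<longleftrightarrow>
     \<not> (\<exists>(B::'a set) D n. is_subgroup B \<and> is_subgroup D \<and> B \<noteq> {0} \<and> D \<noteq> {0} \<and>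
          B \<inter> D = {0} \<and> 0 < n \<and> (\<forall>x. \<exists>b\<in>B. \<exists>d\<in>D. nsmul n x = b + d))"

definition pure_subgroup :: "'a::ab_group_add set \<Rightarrow> bool" where
  "pure_subgroup B \<longleftrightarrow> is_subgroup B \<and>
     (\<forall>n y. 0 < n \<longrightarrow> nsmul n y \<in> B \<longrightarrow> (\<exists>b\<in>B. nsmul n b = nsmul n y))"

definition fully_invariant :: "'a::ab_group_add set \<Rightarrow> bool" where
  "fully_invariant B \<longleftrightarrow> (\<forall>f\<in>End_grp. f ` B \<subseteq> B)"

definition pure_fi :: "'a::ab_group_add set \<Rightarrow> bool" where
  "pure_fi B \<longleftrightarrow> pure_subgroup B \<and> fully_invariant B"

definition minimal_pure_fi :: "'a::ab_group_add set \<Rightarrow> bool" where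
  "minimal_pure_fi B \<longleftrightarrow> pure_fi B \<and> B \<noteq> {0} \<and>
     (\<forall>C. pure_fi C \<and> C \<noteq> {0} \<and> C \<subseteq> B \<longrightarrow> C = B)"

definition pure_hull :: "'a::ab_group_add set \<Rightarrow> 'a set" where
  "pure_hull S = \<Inter>{B. pure_subgroup B \<and> S \<subseteq> B}"

definition PSoc :: "'a::ab_group_add itself \<Rightarrow> 'a set" where
  "PSoc _ = pure_hull (\<Union>{B::'a set. minimal_pure_fi B})"

definition End_center :: "('a::ab_group_add \<Rightarrow> 'a) set" where
  "End_center = {z \<in> End_grp. \<forall>f\<in>End_grp. z \<circ> f = f \<circ> z}"

definition End_centrally_essential :: "'a::ab_group_add itself \<Rightarrow> bool" where
  "End_centrally_essential _ \<longleftrightarrow>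
     (\<forall>a\<in>(End_grp :: ('a \<Rightarrow> 'a) set). a \<noteq> (\<lambda>_. 0) \<longrightarrow>
        (\<exists>x\<in>End_center. \<exists>y\<in>End_center. x \<noteq> (\<lambda>_. 0) \<and> y \<noteq> (\<lambda>_. 0) \<and> a \<circ> x = y))"

definition End_commutative :: "'a::ab_group_add itself \<Rightarrow> bool" where
  "End_commutative _ \<longleftrightarrow> (\<forall>f\<in>(End_grp :: ('a \<Rightarrow> 'a) set). \<forall>g\<in>End_grp. f \<circ> g = g \<circ> f)"

end

theory Submission
  imports Defs
begin

lemma nsmul_0[simp]: "nsmul 0 x = 0" by (simp add: nsmul_def)
lemma nsmul_Suc: "nsmul (Suc n) x = nsmul n x + x" by (simp add: nsmul_def)
lemma nsmul_1[simp]: "nsmul 1 x = x" by (simp add: nsmul_def)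
lemma nsmul_Suc0[simp]: "nsmul (Suc 0) x = x" by (simp add: nsmul_def)
lemma nsmul_add: "nsmul n (x + y) = nsmul n x + nsmul n y"
  by (simp add: nsmul_def sum.distrib)
lemma nsmul_minus: "nsmul n (- x) = - nsmul n x"
  by (simp add: nsmul_def sum_negf)
lemma nsmul_diff: "nsmul n (x - y) = nsmul n x - nsmul n y"
  using nsmul_add[of n x "-y"] nsmul_minus[of n y] by simp
lemma nsmul_zero[simp]: "nsmul n (0::'a::ab_group_add) = 0" by (simp add: nsmul_def)

lemma End_0: "f \<in> End_grp \<Longrightarrow> f 0 = 0"
proof -
  assume "f \<in> End_grp"
  then have "f (0 + 0) = f 0 + f 0" unfolding End_grp_def by blast
  then show ?thesis by simp
qed
lemma End_add: "f \<in> End_grp \<Longrightarrow> f (a + b) = f a + f b"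
  unfolding End_grp_def by blast
lemma End_minus: "f \<in> End_grp \<Longrightarrow> f (- a) = - f a"
proof -
  assume f: "f \<in> End_grp"
  have "f a + f (- a) = 0" using End_add[OF f, of a "-a"] End_0[OF f] by simp
  then show ?thesis by (simp add: minus_unique)
qed
lemma End_nsmul: "f \<in> End_grp \<Longrightarrow> f (nsmul n a) = nsmul n (f a)"
  by (induction n) (simp_all add: nsmul_Suc End_add End_0)
lemma End_comp: "f \<in> End_grp \<Longrightarrow> g \<in> End_grp \<Longrightarrow> f \<circ> g \<in> End_grp"
  unfolding End_grp_def by simp
lemma End_id: "id \<in> End_grp" unfolding End_grp_def by simp
lemma End_funpow: "f \<in> End_grp \<Longrightarrow> (f ^^ n) \<in> End_grp"
  by (induction n) (simp_all add: End_id End_comp)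

lemma tf_zero:
  assumes "torsion_free TYPE('a::ab_group_add)" "0 < n" "nsmul n (x::'a) = 0"
  shows "x = 0" using assms unfolding torsion_free_def by blast

lemma tf_cancel:
  assumes "torsion_free TYPE('a::ab_group_add)" "0 < n" "nsmul n (x::'a) = nsmul n y"
  shows "x = y"
  using tf_zero[OF assms(1,2), of "x - y"] assms(3) by (simp add: nsmul_diff)

lemma sub_nsmul: "is_subgroup B \<Longrightarrow> b \<in> B \<Longrightarrow> nsmul n b \<in> B"
  by (induction n) (auto simp: nsmul_Suc is_subgroup_def)

lemma sub_zsmul: "is_subgroup B \<Longrightarrow> b \<in> B \<Longrightarrow> zsmul k b \<in> B"
  using sub_nsmul unfolding zsmul_def is_subgroup_def by auto

lemma sub_sum: "finite S \<Longrightarrow> is_subgroup B \<Longrightarrow> (\<forall>s\<in>S. g s \<in> B) \<Longrightarrow> sum g S \<in> B"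
  by (induction S rule: finite_induct) (auto simp: is_subgroup_def)

definition rk :: "'a::ab_group_add set \<Rightarrow> nat" where
  "rk X = Max (card ` {S. S \<subseteq> X \<and> lin_indep S})"

lemma lin_indep_empty: "lin_indep {}" by (simp add: lin_indep_def)

lemma rk_props:
  assumes "finite_rank TYPE('a::ab_group_add)"
  shows "S \<subseteq> (X::'a set) \<Longrightarrow> lin_indep S \<Longrightarrow> card S \<le> rk X"
    and "\<exists>S. S \<subseteq> X \<and> lin_indep S \<and> card S = rk X"
    and "\<exists>N. \<forall>Y::'a set. rk Y \<le> N"
proof -
  obtain N where N: "\<forall>S::'a set. lin_indep S \<longrightarrow> card S \<le> N"
    using assms unfolding finite_rank_def by blast
  have fin: "finite (card ` {S. S \<subseteq> Y \<and> lin_indep S})" for Y :: "'a set"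
  proof (rule finite_subset[of _ "{0..N}"])
    show "card ` {S. S \<subseteq> Y \<and> lin_indep S} \<subseteq> {0..N}" using N by (auto simp: image_subset_iff)
  qed simp
  have ne: "card ` {S. S \<subseteq> Y \<and> lin_indep S} \<noteq> {}" for Y :: "'a set"
    using lin_indep_empty by blast
  show "S \<subseteq> X \<Longrightarrow> lin_indep S \<Longrightarrow> card S \<le> rk X"
  proof -
    assume "S \<subseteq> X" "lin_indep S"
    then have "card S \<in> card ` {S. S \<subseteq> X \<and> lin_indep S}" by blast
    then show ?thesis unfolding rk_def using fin by (rule Max_ge[rotated])
  qed
  have mx: "rk Y \<in> card ` {S. S \<subseteq> Y \<and> lin_indep S}" for Y :: "'a set"
    unfolding rk_def by (rule Max_in[OF fin ne])
  show "\<exists>S. S \<subseteq> X \<and> lin_indep S \<and> card S = rk X"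
    using mx[of X] by (auto simp: image_iff)
  show "\<exists>N. \<forall>Y::'a set. rk Y \<le> N"
  proof (intro exI allI)
    fix Y :: "'a set"
    obtain S where "S \<subseteq> Y" "lin_indep S" "rk Y = card S" using mx[of Y] by blast
    then show "rk Y \<le> N" using N by simp
  qed
qed

lemma rk_mono:
  assumes "finite_rank TYPE('a::ab_group_add)" "(X::'a set) \<subseteq> Y"
  shows "rk X \<le> rk Y"
proof -
  obtain S where S: "S \<subseteq> X" "lin_indep S" "card S = rk X" using rk_props(2)[OF assms(1), of X] by blast
  have "S \<subseteq> Y" using S(1) assms(2) by (rule order_trans)
  from rk_props(1)[OF assms(1) this S(2)] S(3) show ?thesis by simp
qed

lemma rk_torsion:
  assumes fr: "finite_rank TYPE('a::ab_group_add)" and B: "is_subgroup (B::'a set)"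
    and BC: "B \<subseteq> C" and r: "rk C \<le> rk B" and c: "c \<in> C"
  shows "\<exists>n>0. nsmul n c \<in> B"
proof (rule ccontr)
  assume nc: "\<not> (\<exists>n>0. nsmul n c \<in> B)"
  obtain S where S: "S \<subseteq> B" "lin_indep S" "card S = rk B" using rk_props(2)[OF fr] by blast
  have finS: "finite S" using S(2) lin_indep_def by blast
  have cS: "c \<notin> S" using nc S(1) by (metis nsmul_1 subsetD zero_less_one)
  have "lin_indep (insert c S)"
    unfolding lin_indep_def
  proof (intro conjI allI impI ballI)
    show "finite (insert c S)" using finS by simp
  next
    fix k :: "'a \<Rightarrow> int" and s
    assume sum0: "(\<Sum>s\<in>insert c S. zsmul (k s) s) = 0" and s: "s \<in> insert c S"
    have eq: "zsmul (k c) c + (\<Sum>s\<in>S. zsmul (k s) s) = 0"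
      using sum0 finS cS by simp
    have inB: "(\<Sum>s\<in>S. zsmul (k s) s) \<in> B"
      using S(1) by (intro sub_sum[OF finS B] ballI sub_zsmul[OF B]) blast
    have zB: "zsmul (k c) c \<in> B"
    proof -
      have "zsmul (k c) c = - (\<Sum>s\<in>S. zsmul (k s) s)" using eq by (simp add: eq_neg_iff_add_eq_0)
      then show ?thesis using inB B unfolding is_subgroup_def by simp
    qed
    have kc: "k c = 0"
    proof (rule ccontr)
      assume "k c \<noteq> 0"
      show False
      proof (cases "0 \<le> k c")
        case True
        then have "nsmul (nat (k c)) c \<in> B" using zB by (simp add: zsmul_def)
        moreover have "0 < nat (k c)" using True \<open>k c \<noteq> 0\<close> by simp
        ultimately show False using nc by blast
      next
        case False
        then have "- nsmul (nat (- k c)) c \<in> B" using zB by (simp add: zsmul_def)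
        then have "- (- nsmul (nat (- k c)) c) \<in> B" using B unfolding is_subgroup_def by blast
        then have "nsmul (nat (- k c)) c \<in> B" by simp
        moreover have "0 < nat (- k c)" using False by simp
        ultimately show False using nc by blast
      qed
    qed
    then have "(\<Sum>s\<in>S. zsmul (k s) s) = 0" using eq by (simp add: zsmul_def)
    then have "\<forall>s\<in>S. k s = 0" using S(2) unfolding lin_indep_def by blast
    then show "k s = 0" using s kc by auto
  qed
  moreover have "insert c S \<subseteq> C" using S(1) BC c by auto
  ultimately have "card (insert c S) \<le> rk C" using rk_props(1)[OF fr] by blast
  then show False using finS cS S(3) r by simp
qed

lemma mono_evconst:
  fixes f :: "nat \<Rightarrow> nat"
  assumes "mono f" "\<forall>j. f j \<le> N"
  shows "\<exists>k0\<ge>k. \<forall>j\<ge>k0. f j = f k0"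
proof (induction "N - f k" arbitrary: k rule: less_induct)
  case less
  show ?case
  proof (cases "\<forall>j\<ge>k. f j = f k")
    case True then show ?thesis by blast
  next
    case False
    then obtain j where j: "j \<ge> k" "f j \<noteq> f k" by blast
    have "f j > f k" using monoD[OF assms(1) j(1)] j(2) by simp
    then have "N - f j < N - f k" using assms(2)[rule_format, of j] by linarith
    from less[OF this] obtain k0 where k0: "k0 \<ge> j" "\<forall>j'\<ge>k0. f j' = f k0" by blast
    have "k0 \<ge> k" using k0(1) j(1) by simp
    then show ?thesis using k0(2) by blast
  qed
qed

lemma nsmul_add_left: "nsmul (m + n) v = nsmul m v + nsmul n v"
  by (induction n) (simp_all add: nsmul_Suc add.assoc)

lemma nsmul_mult: "nsmul (m * n) v = nsmul m (nsmul n v)"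
proof (induction m)
  case (Suc m)
  have "nsmul (Suc m * n) v = nsmul (m * n) v + nsmul n v"
    using nsmul_add_left[of "m * n" n v] by (simp add: add.commute)
  then show ?case using Suc by (simp add: nsmul_Suc)
qed simp

lemma zsmul_nat: "zsmul (int n) v = nsmul n v" by (simp add: zsmul_def)
lemma zsmul_negnat: "zsmul (- int n) v = - nsmul n v"
  by (cases "n = 0") (simp_all add: zsmul_def)

lemma int_pm: "\<exists>n. (a::int) = int n \<or> a = - int n"
proof (cases "0 \<le> a")
  case True then show ?thesis by (metis nonneg_int_cases)
next
  case False then have "0 \<le> - a" by simp
  then obtain n where "- a = int n" using nonneg_int_cases by blast
  then show ?thesis by (intro exI[of _ n]) simp
qed

lemma zsmul_mult: "zsmul (a * b) v = zsmul a (zsmul b v)"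
proof -
  obtain n where n: "a = int n \<or> a = - int n" using int_pm by blast
  obtain m where m: "b = int m \<or> b = - int m" using int_pm by blast
  have nm: "int n * int m = int (n * m)" by simp
  show ?thesis
  proof (cases "a = int n")
    case True
    show ?thesis
    proof (cases "b = int m")
      case True
      then show ?thesis using \<open>a = int n\<close> nm by (simp only: zsmul_nat nsmul_mult)
    next
      case False
      then have b: "b = - int m" using m by simp
      have "a * b = - int (n * m)" using \<open>a = int n\<close> b by simp
      then show ?thesis using \<open>a = int n\<close> b by (simp only: zsmul_nat zsmul_negnat nsmul_mult nsmul_minus)
    qed
  next
    case False
    then have a: "a = - int n" using n by simp
    show ?thesis
    proof (cases "b = int m")
      case True
      have "a * b = - int (n * m)" using a True by simp
      then show ?thesis using a True by (simp only: zsmul_nat zsmul_negnat nsmul_mult)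
    next
      case False
      then have b: "b = - int m" using m by simp
      have "a * b = int (n * m)" using a b by simp
      then show ?thesis using a b by (simp only: zsmul_nat zsmul_negnat nsmul_mult nsmul_minus minus_minus)
    qed
  qed
qed

lemma zsmul_add: "zsmul k (v + w) = zsmul k v + zsmul k w"
  by (simp add: zsmul_def nsmul_add)
lemma zsmul_minus: "zsmul k (- v) = - zsmul k v"
  by (simp add: zsmul_def nsmul_minus)
lemma zsmul_0[simp]: "zsmul 0 v = 0" by (simp add: zsmul_def)
lemma zsmul_1[simp]: "zsmul 1 v = v" by (simp add: zsmul_def)
lemma zsmul_m1: "zsmul (-1) v = - v" by (simp add: zsmul_def)
lemma zsmul_zero[simp]: "zsmul k (0::'a::ab_group_add) = 0" by (simp add: zsmul_def)

lemma End_zsmul: "f \<in> End_grp \<Longrightarrow> f (zsmul k v) = zsmul k (f v)"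
  by (simp add: zsmul_def End_nsmul End_minus)

lemma End_sum:
  assumes "f \<in> End_grp" "finite I" shows "f (\<Sum>i\<in>I. g i) = (\<Sum>i\<in>I. f (g i))"
  using assms(2) by (induction I rule: finite_induct) (simp_all add: End_0[OF assms(1)] End_add[OF assms(1)])

lemma End_diff: "f \<in> End_grp \<Longrightarrow> f (a - b) = f a - f b"
  using End_add[of f a "-b"] End_minus[of f b] by simp

lemma End_lincomb: "(\<And>j. g j \<in> End_grp) \<Longrightarrow> (\<lambda>v. \<Sum>j\<in>I. zsmul (c j) (g j v)) \<in> End_grp"
  unfolding End_grp_def by (simp add: zsmul_add sum.distrib)

lemma tf_zsmul:
  assumes "torsion_free TYPE('a::ab_group_add)" "k \<noteq> 0" "zsmul k (v::'a) = 0"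
  shows "v = 0"
proof -
  obtain n where n: "k = int n \<or> k = - int n" using int_pm by blast
  have "0 < n" using n assms(2) by auto
  moreover have "nsmul n v = 0" using n assms(3) by (auto simp: zsmul_nat zsmul_negnat)
  ultimately show ?thesis using tf_zero[OF assms(1)] by blast
qed

lemma sub_image_End: "f \<in> End_grp \<Longrightarrow> is_subgroup (range f)"
proof -
  assume f: "f \<in> End_grp"
  show ?thesis unfolding is_subgroup_def
  proof (intro conjI ballI)
    show "0 \<in> range f" using End_0[OF f] by (metis rangeI)
    fix a b assume "a \<in> range f" "b \<in> range f"
    then obtain a' b' where "a = f a'" "b = f b'" by blast
    then show "a + b \<in> range f" using End_add[OF f, of a' b'] by (metis rangeI)
  next
    fix a assume "a \<in> range f"
    then obtain a' where "a = f a'" by blast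
    then show "- a \<in> range f" using End_minus[OF f, of a'] by (metis rangeI)
  qed
qed

lemma sub_kernel_End: "f \<in> End_grp \<Longrightarrow> is_subgroup {v. f v = 0}"
  unfolding is_subgroup_def using End_0[of f] End_add[of f] End_minus[of f] by simp

lemma funpow_maps: "\<alpha> ` C \<subseteq> C \<Longrightarrow> v \<in> C \<Longrightarrow> (\<alpha> ^^ (j::nat)) v \<in> C"
  by (induction j) auto

lemma funpow_inj: "\<alpha> ` C \<subseteq> C \<Longrightarrow> inj_on \<alpha> C \<Longrightarrow> inj_on (\<alpha> ^^ (j::nat)) C"
proof (induction j)
  case 0 then show ?case by simp
next
  case (Suc j)
  show ?case unfolding inj_on_def
  proof (intro ballI impI)
    fix a b assume a: "a \<in> C" and b: "b \<in> C" and e: "(\<alpha> ^^ Suc j) a = (\<alpha> ^^ Suc j) b"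
    have "\<alpha> ((\<alpha> ^^ j) a) = \<alpha> ((\<alpha> ^^ j) b)" using e by simp
    then have "(\<alpha> ^^ j) a = (\<alpha> ^^ j) b"
      using Suc.prems(2) funpow_maps[OF Suc.prems(1) a] funpow_maps[OF Suc.prems(1) b]
      unfolding inj_on_def by blast
    then show "a = b" using Suc.IH[OF Suc.prems] a b unfolding inj_on_def by blast
  qed
qed

lemma sum_split_shift:
  "(\<Sum>i\<le>i0 + (d::nat). (g i :: 'b::comm_monoid_add)) = (\<Sum>i<i0. g i) + (\<Sum>j\<le>d. g (i0 + j))"
proof (induction d)
  case 0 then show ?case by (simp add: lessThan_Suc_atMost[symmetric])
next
  case (Suc d) then show ?case by (simp add: add.assoc)
qed

definition good :: "('a::ab_group_add \<Rightarrow> 'a) \<Rightarrow> 'a set \<Rightarrow> ('a \<Rightarrow> 'a) \<Rightarrow> bool" where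
  "good \<alpha> C T \<longleftrightarrow> T \<in> End_grp \<and> T ` C \<subseteq> C \<and>
     (\<exists>k R. k \<noteq> 0 \<and> R \<in> End_grp \<and> R ` C \<subseteq> C \<and> (\<forall>v. T v = zsmul k v + \<alpha> (R v)))"

lemma good_id: "\<alpha> \<in> End_grp \<Longrightarrow> is_subgroup C \<Longrightarrow> good \<alpha> C id"
  unfolding good_def
proof (intro conjI exI[of _ 1] exI[of _ "\<lambda>_. 0"])
  assume "\<alpha> \<in> End_grp" "is_subgroup C"
  then show "(\<lambda>_. 0) ` C \<subseteq> C" "\<forall>v. id v = zsmul 1 v + \<alpha> 0"
    by (auto simp: is_subgroup_def End_0)
qed (auto simp: End_id End_grp_def)

lemma good_comp:
  assumes a: "\<alpha> \<in> End_grp" and C: "is_subgroup C" and g1: "good \<alpha> C T1" and g2: "good \<alpha> C T2"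
  shows "good \<alpha> C (T1 \<circ> T2)"
proof -
  obtain k1 R1 where T1: "T1 \<in> End_grp" "T1 ` C \<subseteq> C" "k1 \<noteq> 0" "R1 \<in> End_grp" "R1 ` C \<subseteq> C"
    "\<forall>v. T1 v = zsmul k1 v + \<alpha> (R1 v)" using g1 unfolding good_def by blast
  obtain k2 R2 where T2: "T2 \<in> End_grp" "T2 ` C \<subseteq> C" "k2 \<noteq> 0" "R2 \<in> End_grp" "R2 ` C \<subseteq> C"
    "\<forall>v. T2 v = zsmul k2 v + \<alpha> (R2 v)" using g2 unfolding good_def by blast
  define R where "R = (\<lambda>v. zsmul k1 (R2 v) + R1 (T2 v))"
  have "R \<in> End_grp" unfolding End_grp_def R_def
    by (simp add: End_add[OF T2(4)] End_add[OF T2(1)] End_add[OF T1(4)] zsmul_add ac_simps)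
  moreover have "R ` C \<subseteq> C"
  proof
    fix y assume "y \<in> R ` C"
    then obtain v where v: "v \<in> C" "y = R v" by blast
    have "zsmul k1 (R2 v) \<in> C" using sub_zsmul[OF C] T2(5) v(1) by blast
    moreover have "R1 (T2 v) \<in> C" using T1(5) T2(2) v(1) by blast
    ultimately show "y \<in> C" using C v(2) unfolding R_def is_subgroup_def by blast
  qed
  moreover have "k1 * k2 \<noteq> 0" using T1(3) T2(3) by simp
  moreover have "\<forall>v. (T1 \<circ> T2) v = zsmul (k1 * k2) v + \<alpha> (R v)"
  proof
    fix v
    have "(T1 \<circ> T2) v = zsmul k1 (zsmul k2 v + \<alpha> (R2 v)) + \<alpha> (R1 (T2 v))"
      using T1(6) T2(6) by simp
    also have "\<dots> = zsmul (k1 * k2) v + (zsmul k1 (\<alpha> (R2 v)) + \<alpha> (R1 (T2 v)))"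
      by (simp add: zsmul_add zsmul_mult add.assoc)
    also have "zsmul k1 (\<alpha> (R2 v)) + \<alpha> (R1 (T2 v)) = \<alpha> (R v)"
      unfolding R_def by (simp add: End_add[OF a] End_zsmul[OF a])
    finally show "(T1 \<circ> T2) v = zsmul (k1 * k2) v + \<alpha> (R v)" .
  qed
  moreover have "T1 \<circ> T2 \<in> End_grp" by (rule End_comp[OF T1(1) T2(1)])
  moreover have "(T1 \<circ> T2) ` C \<subseteq> C" using T1(2) T2(2) by auto
  ultimately show ?thesis unfolding good_def by blast
qed

lemma annih_vec:
  assumes fr: "finite_rank TYPE('a::ab_group_add)" and a: "\<alpha> \<in> End_grp"
    and C: "is_subgroup (C::'a set)" and aC: "\<alpha> ` C \<subseteq> C" and inj: "inj_on \<alpha> C" and u: "u \<in> C"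
  shows "\<exists>T. good \<alpha> C T \<and> T u = 0"
proof -
  define r where "r = rk C"
  define w where "w = (\<lambda>i. (\<alpha> ^^ i) u)"
  have wC: "w i \<in> C" for i unfolding w_def using funpow_maps[OF aC u] .
  have dep: "\<exists>k::nat\<Rightarrow>int. (\<exists>i\<le>r. k i \<noteq> 0) \<and> (\<Sum>i\<le>r. zsmul (k i) (w i)) = 0"
  proof (cases "inj_on w {..r}")
    case True
    define U where "U = w ` {..r}"
    have cU: "card U = Suc r" unfolding U_def using card_image[OF True] by simp
    have UC: "U \<subseteq> C" unfolding U_def using wC by blast
    have "\<not> lin_indep U"
    proof
      assume "lin_indep U"
      then have "card U \<le> rk C" using rk_props(1)[OF fr UC] by blast
      then show False using cU unfolding r_def by simp
    qed
    moreover have "finite U" unfolding U_def by simp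
    ultimately obtain c where c: "(\<Sum>s\<in>U. zsmul (c s) s) = 0" "\<exists>s\<in>U. c s \<noteq> 0"
      unfolding lin_indep_def by blast
    have "(\<Sum>i\<le>r. zsmul (c (w i)) (w i)) = 0"
      using c(1) sum.reindex[OF True, of "\<lambda>s. zsmul (c s) s"] unfolding U_def by simp
    moreover have "\<exists>i\<le>r. c (w i) \<noteq> 0" using c(2) unfolding U_def by blast
    ultimately show ?thesis by (intro exI[of _ "\<lambda>i. c (w i)"]) blast
  next
    case False
    then obtain i j where ij: "i \<le> r" "j \<le> r" "i \<noteq> j" "w i = w j"
      unfolding inj_on_def by auto
    define k :: "nat \<Rightarrow> int" where "k = (\<lambda>l. if l = i then 1 else if l = j then -1 else 0)"
    have "(\<Sum>l\<le>r. zsmul (k l) (w l)) = (\<Sum>l\<in>{i,j}. zsmul (k l) (w l))"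
      by (rule sum.mono_neutral_right) (use ij in \<open>auto simp: k_def\<close>)
    also have "\<dots> = w i - w j" using ij(3) by (simp add: k_def zsmul_m1)
    also have "\<dots> = 0" using ij(4) by simp
    finally show ?thesis using ij(1) by (intro exI[of _ k]) (auto simp: k_def)
  qed
  then obtain k :: "nat \<Rightarrow> int" where k: "\<exists>i\<le>r. k i \<noteq> 0" "(\<Sum>i\<le>r. zsmul (k i) (w i)) = 0"
    by blast
  define i0 where "i0 = (LEAST i. k i \<noteq> 0)"
  obtain i1 where i1: "i1 \<le> r" "k i1 \<noteq> 0" using k(1) by blast
  have ki0: "k i0 \<noteq> 0" unfolding i0_def by (rule LeastI[of _ i1]) (rule i1(2))
  have i0r: "i0 \<le> r" using Least_le[of "\<lambda>i. k i \<noteq> 0" i1] i1 unfolding i0_def by simp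
  have below: "k i = 0" if "i < i0" for i using not_less_Least[of i "\<lambda>i. k i \<noteq> 0"] that
    unfolding i0_def by blast
  define d where "d = r - i0"
  have rd: "r = i0 + d" unfolding d_def using i0r by simp
  define T where "T = (\<lambda>v. \<Sum>j\<le>d. zsmul (k (i0 + j)) ((\<alpha> ^^ j) v))"
  define R where "R = (\<lambda>v. \<Sum>j<d. zsmul (k (i0 + Suc j)) ((\<alpha> ^^ j) v))"
  have aE: "(\<alpha> ^^ j) \<in> End_grp" for j using End_funpow[OF a] .
  have TE: "T \<in> End_grp" unfolding T_def by (rule End_lincomb) (rule aE)
  have RE: "R \<in> End_grp" unfolding R_def by (rule End_lincomb) (rule aE)
  have TC: "T ` C \<subseteq> C"
  proof
    fix y assume "y \<in> T ` C"
    then obtain v where v: "v \<in> C" "y = T v" by blast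
    show "y \<in> C" unfolding v(2) T_def
      by (rule sub_sum[OF _ C]) (use sub_zsmul[OF C] funpow_maps[OF aC v(1)] in auto)
  qed
  have RC: "R ` C \<subseteq> C"
  proof
    fix y assume "y \<in> R ` C"
    then obtain v where v: "v \<in> C" "y = R v" by blast
    show "y \<in> C" unfolding v(2) R_def
      by (rule sub_sum[OF _ C]) (use sub_zsmul[OF C] funpow_maps[OF aC v(1)] in auto)
  qed
  have Teq: "\<forall>v. T v = zsmul (k i0) v + \<alpha> (R v)"
  proof
    fix v
    have "T v = zsmul (k i0) v + (\<Sum>j<d. zsmul (k (i0 + Suc j)) ((\<alpha> ^^ Suc j) v))"
      unfolding T_def by (subst sum.atMost_shift) simp
    also have "(\<Sum>j<d. zsmul (k (i0 + Suc j)) ((\<alpha> ^^ Suc j) v)) = \<alpha> (R v)"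
      unfolding R_def by (simp add: End_sum[OF a] End_zsmul[OF a])
    finally show "T v = zsmul (k i0) v + \<alpha> (R v)" .
  qed
  have "(\<alpha> ^^ i0) (T u) = (\<Sum>j\<le>d. zsmul (k (i0 + j)) (w (i0 + j)))"
    unfolding T_def w_def by (simp add: End_sum[OF aE] End_zsmul[OF aE] funpow_add)
  also have "\<dots> = (\<Sum>i\<le>r. zsmul (k i) (w i))"
    unfolding rd sum_split_shift using below by simp
  also have "\<dots> = 0" by (rule k(2))
  finally have "(\<alpha> ^^ i0) (T u) = (\<alpha> ^^ i0) 0" using End_0[OF aE] by simp
  moreover have "T u \<in> C" using TC u by blast
  moreover have "(0::'a) \<in> C" using C unfolding is_subgroup_def by blast
  ultimately have "T u = 0" using funpow_inj[OF aC inj, of i0] unfolding inj_on_def by blast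
  moreover have "good \<alpha> C T" unfolding good_def using TE TC ki0 RE RC Teq by blast
  ultimately show ?thesis by blast
qed

lemma bounded_coker:
  assumes tf: "torsion_free TYPE('a::ab_group_add)" and fr: "finite_rank TYPE('a)" and a: "\<alpha> \<in> End_grp"
    and C: "is_subgroup (C::'a set)" and aC: "\<alpha> ` C \<subseteq> C" and inj: "inj_on \<alpha> C"
  shows "\<exists>m>0. \<forall>c\<in>C. \<exists>c'\<in>C. nsmul m c = \<alpha> c'"
proof -
  have kill: "S' \<subseteq> C \<Longrightarrow> \<exists>T. good \<alpha> C T \<and> (\<forall>s\<in>S'. T s = 0)" if "finite S'" for S'
    using that
  proof (induction S' rule: finite_induct)
    case empty then show ?case using good_id[OF a C] by blast
  next
    case (insert s F)
    then obtain T0 where T0: "good \<alpha> C T0" "\<forall>s\<in>F. T0 s = 0" by blast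
    have "T0 s \<in> C" using T0(1) insert.prems unfolding good_def by blast
    then obtain T' where T': "good \<alpha> C T'" "T' (T0 s) = 0"
      using annih_vec[OF fr a C aC inj] by blast
    have T'E: "T' \<in> End_grp" using T'(1) unfolding good_def by blast
    have "good \<alpha> C (T' \<circ> T0)" by (rule good_comp[OF a C T'(1) T0(1)])
    moreover have "\<forall>s'\<in>insert s F. (T' \<circ> T0) s' = 0"
      using T0(2) T'(2) End_0[OF T'E] by auto
    ultimately show ?case by blast
  qed
  obtain S where S: "S \<subseteq> C" "lin_indep S" "card S = rk C" using rk_props(2)[OF fr] by blast
  have finS: "finite S" using S(2) lin_indep_def by blast
  obtain T where T: "good \<alpha> C T" "\<forall>s\<in>S. T s = 0" using kill[OF finS S(1)] by blast
  obtain k R where kR: "T \<in> End_grp" "k \<noteq> 0" "R \<in> End_grp" "R ` C \<subseteq> C"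
    "\<forall>v. T v = zsmul k v + \<alpha> (R v)" using T(1) unfolding good_def by blast
  have Tc: "T c = 0" if c: "c \<in> C" for c
  proof (cases "c \<in> S")
    case True then show ?thesis using T(2) by blast
  next
    case False
    have "insert c S \<subseteq> C" using S(1) c by blast
    moreover have "card (insert c S) = Suc (rk C)" using False finS S(3) by simp
    ultimately have "\<not> lin_indep (insert c S)"
      using rk_props(1)[OF fr, of "insert c S" C] by linarith
    moreover have "finite (insert c S)" using finS by simp
    ultimately obtain q where q: "(\<Sum>s\<in>insert c S. zsmul (q s) s) = 0" "\<exists>s\<in>insert c S. q s \<noteq> 0"
      unfolding lin_indep_def by blast
    have qsum: "zsmul (q c) c + (\<Sum>s\<in>S. zsmul (q s) s) = 0" using q(1) finS False by simp
    have qc: "q c \<noteq> 0"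
    proof
      assume "q c = 0"
      then have "(\<Sum>s\<in>S. zsmul (q s) s) = 0" using qsum by simp
      then have "\<forall>s\<in>S. q s = 0" using S(2) unfolding lin_indep_def by blast
      then show False using q(2) \<open>q c = 0\<close> by blast
    qed
    have "T (zsmul (q c) c + (\<Sum>s\<in>S. zsmul (q s) s)) = zsmul (q c) (T c)"
      using T(2) by (simp add: End_add[OF kR(1)] End_sum[OF kR(1) finS] End_zsmul[OF kR(1)])
    then have "zsmul (q c) (T c) = 0" using qsum End_0[OF kR(1)] by simp
    then show ?thesis using tf_zsmul[OF tf qc] by blast
  qed
  obtain n where n: "k = int n \<or> k = - int n" using int_pm by blast
  have n0: "0 < n" using n kR(2) by auto
  have "\<forall>c\<in>C. \<exists>c'\<in>C. nsmul n c = \<alpha> c'"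
  proof
    fix c assume c: "c \<in> C"
    have e: "zsmul k c + \<alpha> (R c) = 0" using Tc[OF c] kR(5) by simp
    have Rc: "R c \<in> C" using kR(4) c by blast
    show "\<exists>c'\<in>C. nsmul n c = \<alpha> c'"
    proof (cases "k = int n")
      case True
      then have "nsmul n c = - \<alpha> (R c)" using e by (simp add: zsmul_nat eq_neg_iff_add_eq_0)
      then have "nsmul n c = \<alpha> (- R c)" using End_minus[OF a] by simp
      moreover have "- R c \<in> C" using Rc C unfolding is_subgroup_def by blast
      ultimately show ?thesis by blast
    next
      case False
      then have "k = - int n" using n by simp
      then have "nsmul n c = \<alpha> (R c)" using e by (simp add: zsmul_negnat add.commute)
      then show ?thesis using Rc by blast
    qed
  qed
  then show ?thesis using n0 by blast
qed

lemma fitting: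
  assumes tf: "torsion_free TYPE('a::ab_group_add)" and fr: "finite_rank TYPE('a)"
    and si: "strongly_indecomposable TYPE('a)" and xE: "(x::'a \<Rightarrow> 'a) \<in> End_grp"
  shows "(\<exists>k. x ^^ k = (\<lambda>_. 0)) \<or> (\<exists>m>0. \<forall>w. \<exists>b. nsmul m w = x b)"
proof -
  define K where "K = (\<lambda>j::nat. {v::'a. (x ^^ j) v = 0})"
  have aE: "(x ^^ j) \<in> End_grp" for j using End_funpow[OF xE] .
  have Ksub: "K j \<subseteq> K j'" if "j \<le> j'" for j j'
  proof
    fix v assume "v \<in> K j"
    then have "(x ^^ j) v = 0" unfolding K_def by simp
    moreover have "(x ^^ j') v = (x ^^ (j' - j)) ((x ^^ j) v)"
      using that by (metis funpow_add le_add_diff_inverse2 comp_apply)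
    ultimately show "v \<in> K j'" unfolding K_def using End_0[OF aE] by simp
  qed
  obtain N where N: "\<forall>Y::'a set. rk Y \<le> N" using rk_props(3)[OF fr] by blast
  have "mono (\<lambda>j. rk (K j))" by (rule monoI) (rule rk_mono[OF fr Ksub])
  then obtain k0 where k0: "\<forall>j\<ge>k0. rk (K j) = rk (K k0)"
    using mono_evconst[of "\<lambda>j. rk (K j)" N 0] N by blast
  define k where "k = Suc k0"
  define p where "p = x ^^ k"
  have pE: "p \<in> End_grp" unfolding p_def by (rule aE)
  have pp: "(x ^^ (k + k)) v = p (p v)" for v unfolding p_def by (simp add: funpow_add)
  have rkeq: "rk (K (k + k)) \<le> rk (K k)" using k0 unfolding k_def
    by (metis le_add1 le_SucI order_refl add_Suc)
  have Kk: "is_subgroup (K k)" unfolding K_def by (rule sub_kernel_End[OF aE])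
  have kerstab: "p c = 0" if "p (p c) = 0" for c
  proof -
    have "c \<in> K (k + k)" unfolding K_def using that pp by simp
    then obtain n where n: "0 < n" "nsmul n c \<in> K k"
      using rk_torsion[OF fr Kk Ksub[of k "k + k"] rkeq] by auto
    then have "nsmul n (p c) = 0" unfolding K_def p_def using End_nsmul[OF aE] by simp
    then show ?thesis using tf_zero[OF tf n(1)] by blast
  qed
  define D where "D = range p"
  define B where "B = {v. p v = 0}"
  have Dsub: "is_subgroup D" unfolding D_def by (rule sub_image_End[OF pE])
  have Bsub: "is_subgroup B" unfolding B_def by (rule sub_kernel_End[OF pE])
  have pD: "p ` D \<subseteq> D" unfolding D_def by blast
  have injD: "inj_on p D" unfolding inj_on_def D_def
  proof (intro ballI impI)
    fix u v assume "u \<in> range p" "v \<in> range p" and e: "p u = p v"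
    then obtain a b where ab: "u = p a" "v = p b" by blast
    have "p (p (a - b)) = 0" using e ab by (simp add: End_diff[OF pE])
    then have "p (a - b) = 0" by (rule kerstab)
    then show "u = v" using ab by (simp add: End_diff[OF pE])
  qed
  obtain m where m: "0 < m" "\<forall>c\<in>D. \<exists>c'\<in>D. nsmul m c = p c'"
    using bounded_coker[OF tf fr pE Dsub pD injD] by blast
  have dec: "\<exists>a'. nsmul m w - p a' \<in> B" for w
  proof -
    obtain c' where "c' \<in> D" "nsmul m (p w) = p c'" using m(2) unfolding D_def by blast
    then obtain a' where a': "nsmul m (p w) = p (p a')" unfolding D_def by blast
    have "p (nsmul m w - p a') = 0" using a' by (simp add: End_diff[OF pE] End_nsmul[OF pE])
    then show ?thesis unfolding B_def by blast
  qed
  have BD: "B \<inter> D = {0}"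
  proof
    show "B \<inter> D \<subseteq> {0}"
    proof
      fix v assume "v \<in> B \<inter> D"
      then obtain a where "v = p a" "p (p a) = 0" unfolding B_def D_def by blast
      then show "v \<in> {0}" using kerstab by simp
    qed
    show "{0} \<subseteq> B \<inter> D" using Bsub Dsub unfolding is_subgroup_def by blast
  qed
  have sum: "\<forall>w. \<exists>b\<in>B. \<exists>d\<in>D. nsmul m w = b + d"
  proof
    fix w obtain a' where "nsmul m w - p a' \<in> B" using dec by blast
    moreover have "p a' \<in> D" unfolding D_def by blast
    moreover have "nsmul m w = (nsmul m w - p a') + p a'" by simp
    ultimately show "\<exists>b\<in>B. \<exists>d\<in>D. nsmul m w = b + d" by blast
  qed
  have "B = {0} \<or> D = {0}"
  proof (rule ccontr)
    assume "\<not> (B = {0} \<or> D = {0})"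
    then have "\<exists>(B::'a set) D n. is_subgroup B \<and> is_subgroup D \<and> B \<noteq> {0} \<and> D \<noteq> {0} \<and>
          B \<inter> D = {0} \<and> 0 < n \<and> (\<forall>x. \<exists>b\<in>B. \<exists>d\<in>D. nsmul n x = b + d)"
      using Bsub Dsub BD m(1) sum by blast
    then show False using si unfolding strongly_indecomposable_def by blast
  qed
  then show ?thesis
  proof (elim disjE)
    assume B0: "B = {0}"
    have "\<forall>w. \<exists>b. nsmul m w = x b"
    proof
      fix w obtain a' where "nsmul m w - p a' \<in> B" using dec by blast
      then have "nsmul m w = p a'" using B0 by simp
      also have "p a' = x ((x ^^ k0) a')" unfolding p_def k_def by simp
      finally show "\<exists>b. nsmul m w = x b" by blast
    qed
    then show ?thesis using m(1) by blast
  next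
    assume "D = {0}"
    then have "p = (\<lambda>_. 0)" unfolding D_def by (auto intro!: ext)
    then show ?thesis unfolding p_def by blast
  qed
qed

lemma central_nilpotent_zero:
  assumes tf: "torsion_free TYPE('a::ab_group_add)" and ps: "PSoc TYPE('a) = UNIV"
    and xZ: "(x::'a \<Rightarrow> 'a) \<in> End_center" and nil: "x ^^ k = (\<lambda>_. 0)"
  shows "x = (\<lambda>_. 0)"
proof -
  have xE: "x \<in> End_grp" and comm: "\<And>f. f \<in> End_grp \<Longrightarrow> x (f v) = f (x v)" for v
    using xZ unfolding End_center_def by (auto dest!: fun_cong[of _ _ v])
  define KX where "KX = {v. x v = 0}"
  have KXsub: "is_subgroup KX" unfolding KX_def by (rule sub_kernel_End[OF xE])
  have KXpure: "y \<in> KX" if "0 < n" "nsmul n y \<in> KX" for n y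
  proof -
    have "nsmul n (x y) = 0" using that(2) End_nsmul[OF xE] unfolding KX_def by simp
    then show ?thesis using tf_zero[OF tf that(1)] unfolding KX_def by blast
  qed
  have KXps: "pure_subgroup KX" unfolding pure_subgroup_def using KXsub KXpure by blast
  have minK: "M \<subseteq> KX" if M: "minimal_pure_fi M" for M
  proof -
    have Mpf: "pure_fi M" and M0: "M \<noteq> {0}"
      and Mmin: "\<And>C. pure_fi C \<Longrightarrow> C \<noteq> {0} \<Longrightarrow> C \<subseteq> M \<Longrightarrow> C = M"
      using M unfolding minimal_pure_fi_def by blast+
    have Msub: "is_subgroup M" and Mpure: "\<And>n y. 0 < n \<Longrightarrow> nsmul n y \<in> M \<Longrightarrow> \<exists>b\<in>M. nsmul n b = nsmul n y"
      and Mfi: "\<And>f. f \<in> End_grp \<Longrightarrow> f ` M \<subseteq> M"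
      using Mpf unfolding pure_fi_def pure_subgroup_def fully_invariant_def by blast+
    define Cm where "Cm = M \<inter> KX"
    have Cmsub: "is_subgroup Cm" using Msub KXsub unfolding Cm_def is_subgroup_def by blast
    have "pure_fi Cm" unfolding pure_fi_def pure_subgroup_def fully_invariant_def
    proof (intro conjI allI impI ballI)
      show "is_subgroup Cm" by (rule Cmsub)
    next
      fix n y assume n: "0 < n" and ny: "nsmul n y \<in> Cm"
      obtain b where b: "b \<in> M" "nsmul n b = nsmul n y" using Mpure[OF n] ny unfolding Cm_def by blast
      have "b = y" using tf_cancel[OF tf n b(2)] .
      moreover have "y \<in> KX" using KXpure[OF n] ny unfolding Cm_def by blast
      ultimately show "\<exists>b\<in>Cm. nsmul n b = nsmul n y" using b unfolding Cm_def by blast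
    next
      fix f :: "'a \<Rightarrow> 'a" assume f: "f \<in> End_grp"
      show "f ` Cm \<subseteq> Cm"
      proof
        fix z assume "z \<in> f ` Cm"
        then obtain v where v: "v \<in> M" "x v = 0" "z = f v" unfolding Cm_def KX_def by blast
        have "f v \<in> M" using Mfi[OF f] v(1) by blast
        moreover have "x (f v) = 0" using comm[OF f, of v] v(2) End_0[OF f] by simp
        ultimately show "z \<in> Cm" using v(3) unfolding Cm_def KX_def by blast
      qed
    qed
    show ?thesis
    proof (cases "Cm = {0}")
      case False
      then have "Cm = M" using Mmin[OF \<open>pure_fi Cm\<close>] unfolding Cm_def by blast
      then show ?thesis unfolding Cm_def by blast
    next
      case True
      have xM: "x ` M \<subseteq> M" by (rule Mfi[OF xE])
      have it: "(x ^^ j) v \<in> M \<and> ((x ^^ j) v = 0 \<longrightarrow> v = 0)" if v: "v \<in> M" for v j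
      proof (induction j)
        case 0 then show ?case using v by simp
      next
        case (Suc j)
        have inM: "(x ^^ j) v \<in> M" using Suc by blast
        have "(x ^^ Suc j) v \<in> M" using xM inM by auto
        moreover have "v = 0" if z: "(x ^^ Suc j) v = 0"
        proof -
          have "(x ^^ j) v \<in> Cm" using z inM unfolding Cm_def KX_def by simp
          then have "(x ^^ j) v = 0" using True by blast
          then show ?thesis using Suc by blast
        qed
        ultimately show ?case by blast
      qed
      have "M \<subseteq> {0}"
      proof
        fix v assume v: "v \<in> M"
        have "(x ^^ k) v = 0" using nil by simp
        then show "v \<in> {0}" using it[OF v, of k] by blast
      qed
      then have False using M0 Msub unfolding is_subgroup_def by blast
      then show ?thesis by blast
    qed
  qed
  have "\<Union>{B::'a set. minimal_pure_fi B} \<subseteq> KX" using minK by blast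
  then have "PSoc TYPE('a) \<subseteq> KX" unfolding PSoc_def pure_hull_def using KXps by blast
  then have "\<forall>v. x v = 0" using ps unfolding KX_def by blast
  then show ?thesis by (intro ext) simp
qed

theorem proposition3p3:
  assumes "torsion_free TYPE('a::ab_group_add)"
    and "finite_rank TYPE('a)"
    and "strongly_indecomposable TYPE('a)"
    and "PSoc TYPE('a) = UNIV"
  shows "End_centrally_essential TYPE('a) \<longleftrightarrow> End_commutative TYPE('a)"
proof
  assume ce: "End_centrally_essential TYPE('a)"
  show "End_commutative TYPE('a)" unfolding End_commutative_def
  proof (intro ballI)
    fix f g :: "'a \<Rightarrow> 'a" assume f: "f \<in> End_grp" and g: "g \<in> End_grp"
    show "f \<circ> g = g \<circ> f"
    proof (cases "f = (\<lambda>_. 0)")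
      case True then show ?thesis using End_0[OF g] by (auto intro!: ext)
    next
      case False
      then obtain x y where xy: "x \<in> End_center" "y \<in> End_center" "x \<noteq> (\<lambda>_. 0)" "f \<circ> x = y"
        using ce f unfolding End_centrally_essential_def by blast
      have xE: "x \<in> End_grp" using xy(1) unfolding End_center_def by blast
      have xg: "x \<circ> g = g \<circ> x" using xy(1) g unfolding End_center_def by blast
      have yg: "y \<circ> g = g \<circ> y" using xy(2) g unfolding End_center_def by blast
      have "\<not> (\<exists>k. x ^^ k = (\<lambda>_. 0))"
        using central_nilpotent_zero[OF assms(1) assms(4) xy(1)] xy(3) by blast
      then obtain m where m: "0 < m" "\<forall>w. \<exists>b. nsmul m w = x b"
        using fitting[OF assms(1-3) xE] by blast
      have key: "f (g (x b)) = g (f (x b))" for b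
      proof -
        have "f (g (x b)) = f (x (g b))" using fun_cong[OF xg, of b] by simp
        also have "\<dots> = y (g b)" using fun_cong[OF xy(4), of "g b"] by simp
        also have "\<dots> = g (y b)" using fun_cong[OF yg, of b] by simp
        also have "\<dots> = g (f (x b))" using fun_cong[OF xy(4), of b] by simp
        finally show ?thesis .
      qed
      show ?thesis
      proof
        fix w
        obtain b where b: "nsmul m w = x b" using m(2) by blast
        have "nsmul m (f (g w)) = nsmul m (g (f w))"
          using key[of b] b by (simp add: End_nsmul[OF f, symmetric] End_nsmul[OF g, symmetric])
        then show "(f \<circ> g) w = (g \<circ> f) w" using tf_cancel[OF assms(1) m(1)] by simp
      qed
    qed
  qed
next
  assume cm: "End_commutative TYPE('a)"
  show "End_centrally_essential TYPE('a)" unfolding End_centrally_essential_def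
  proof (intro ballI impI)
    fix a :: "'a \<Rightarrow> 'a" assume a: "a \<in> End_grp" and a0: "a \<noteq> (\<lambda>_. 0)"
    have idZ: "id \<in> End_center" unfolding End_center_def using End_id by auto
    have aZ: "a \<in> End_center" unfolding End_center_def using a cm unfolding End_commutative_def by blast
    have id0: "id \<noteq> (\<lambda>_::'a. 0::'a)"
    proof
      assume "id = (\<lambda>_::'a. 0::'a)"
      then have "\<forall>v::'a. v = 0" by (metis id_apply)
      then have "a = (\<lambda>_. 0)" by (intro ext) blast
      then show False using a0 by blast
    qed
    show "\<exists>x\<in>End_center. \<exists>y\<in>End_center. x \<noteq> (\<lambda>_. 0) \<and> y \<noteq> (\<lambda>_. 0) \<and> a \<circ> x = y"
      using idZ aZ id0 a0 by (intro bexI[of _ id] bexI[of _ a]) auto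
  qed
qed

end
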